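(* For every $\varepsilon\in(0,1)$ there is an integer $c=\Theta\!\left(\frac{\log(1/\varepsilon)}{\varepsilon}\right)$ such that the following two-round algorithm outputs, for every edge-weighted graph $G(V,E)$ with nonnegative weights and every integer $k\ge c$, a matching $M$ with $(3+\varepsilon)\cdot\mathbb{E}[w(M)]\ge \mathrm{opt}(G)$: (1) form a random $k$-clustering $G^{(1)},\ldots,G^{(k)}$ of $G$ with expected multiplicity $c$; (2) for each $i\in[k]$ compute $M_i:=\mathsf{Greedy}(G^{(i)},\pi)$, where $\pi$ is a fixed ordering of $E$ in non-increasing order of weight (ties broken consistently); (3) on the graph $H$ with vertex set $V$ and edge set $\bigcup_i M_i$, compute $M_G:=\mathsf{Greedy}(H,\pi)$, and output the heavier of $M_G$ and $M_1$.
   Context: $\mathrm{opt}(G)$ is the weight of a maximum weight matching; $w(M)$ is the total weight of $M$. $\mathsf{Greedy}(G,\pi)$ scans the edges of $G$ in the order $\pi$ and adds an edge $(u,v)$ to the matching iff neither endpoint is already matched. A random $k$-clustering with expected multiplicity $c$: independently for each edge $e$, draw $c_e\sim\mathrm{Bin}(k,c/k)$ and place $e$ in $c_e$ distinct uniformly random sets among $E^{(1)},\ldots,E^{(k)}$; $G^{(i)}=G(V,E^{(i)})$. The expectation is over the random clustering. *)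

theory Defs
  imports "HOL-Probability.Probability" "HOL-Library.Landau_Symbols"
begin

definition simple_graph :: "'a set \<Rightarrow> 'a set set \<Rightarrow> bool" where
  "simple_graph V E \<longleftrightarrow> finite V \<and> (\<forall>e\<in>E. e \<subseteq> V \<and> card e = 2)"

definition is_matching :: "'a set set \<Rightarrow> 'a set set \<Rightarrow> bool" where
  "is_matching E M \<longleftrightarrow> M \<subseteq> E \<and> (\<forall>e\<in>M. \<forall>f\<in>M. e \<noteq> f \<longrightarrow> e \<inter> f = {})"

definition mweight :: "('a set \<Rightarrow> real) \<Rightarrow> 'a set set \<Rightarrow> real" where
  "mweight w M = (\<Sum>e\<in>M. w e)"

definition opt :: "'a set set \<Rightarrow> ('a set \<Rightarrow> real) \<Rightarrow> real" where
  "opt E w = Max {mweight w M | M. is_matching E M}"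

definition greedy :: "'a set list \<Rightarrow> 'a set set \<Rightarrow> 'a set set" where
  "greedy \<pi> F = foldl (\<lambda>M e. if e \<in> F \<and> e \<inter> \<Union>M = {} then insert e M else M) {} \<pi>"

definition weight_ordering :: "'a set set \<Rightarrow> ('a set \<Rightarrow> real) \<Rightarrow> 'a set list \<Rightarrow> bool" where
  "weight_ordering E w \<pi> \<longleftrightarrow> distinct \<pi> \<and> set \<pi> = E \<and> sorted_wrt (\<lambda>e f. w e \<ge> w f) \<pi>"

definition cluster_pmf :: "nat \<Rightarrow> nat \<Rightarrow> nat set pmf" where
  "cluster_pmf k c = do {
     n \<leftarrow> binomial_pmf k (real c / real k);
     pmf_of_set {S. S \<subseteq> {1..k} \<and> card S = n} }"

text \<open>Random k-clustering with expected multiplicity c: independently per edge.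
  A clustering A maps each edge e to the set of indices i with e in E^(i).\<close>
definition random_clustering :: "'a set set \<Rightarrow> nat \<Rightarrow> nat \<Rightarrow> ('a set \<Rightarrow> nat set) pmf" where
  "random_clustering E k c = Pi_pmf E {} (\<lambda>_. cluster_pmf k c)"

definition cluster_edges :: "'a set set \<Rightarrow> ('a set \<Rightarrow> nat set) \<Rightarrow> nat \<Rightarrow> 'a set set" where
  "cluster_edges E A i = {e\<in>E. i \<in> A e}"

definition alg_output :: "'a set set \<Rightarrow> ('a set \<Rightarrow> real) \<Rightarrow> 'a set list \<Rightarrow> nat
    \<Rightarrow> ('a set \<Rightarrow> nat set) \<Rightarrow> 'a set set" where
  "alg_output E w \<pi> k A =
     (let Ms = (\<lambda>i. greedy \<pi> (cluster_edges E A i));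
          H = (\<Union>i\<in>{1..k}. Ms i);
          MG = greedy \<pi> H
      in if mweight w MG \<ge> mweight w (Ms 1) then MG else Ms 1)"

end

theory Submission
  imports Defs
begin
definition gstep :: "'a set set \<Rightarrow> 'a set set \<Rightarrow> 'a set \<Rightarrow> 'a set set" where
  "gstep F = (\<lambda>M e. if e \<in> F \<and> e \<inter> \<Union>M = {} then insert e M else M)"

lemma greedy_foldl: "greedy \<pi> F = foldl (gstep F) {} \<pi>"
  unfolding greedy_def gstep_def by simp

lemma foldl_mono: "M \<subseteq> foldl (gstep F) M xs"
proof (induction xs arbitrary: M)
  case Nil then show ?case by simp
next
  case (Cons a xs)
  have "M \<subseteq> gstep F M a" by (auto simp: gstep_def)
  also have "\<dots> \<subseteq> foldl (gstep F) (gstep F M a) xs" by (rule Cons.IH)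
  finally show ?case by simp
qed

lemma foldl_sub: "foldl (gstep F) M xs \<subseteq> M \<union> (F \<inter> set xs)"
proof (induction xs arbitrary: M)
  case Nil then show ?case by simp
next
  case (Cons a xs)
  have "foldl (gstep F) (gstep F M a) xs \<subseteq> gstep F M a \<union> (F \<inter> set xs)" by (rule Cons.IH)
  then show ?case by (auto simp: gstep_def split: if_splits)
qed

definition pdisj :: "'a set set \<Rightarrow> bool" where
  "pdisj M \<longleftrightarrow> (\<forall>a\<in>M. \<forall>b\<in>M. a \<noteq> b \<longrightarrow> a \<inter> b = {})"

lemma foldl_pdisj: "pdisj M \<Longrightarrow> pdisj (foldl (gstep F) M xs)"
proof (induction xs arbitrary: M)
  case Nil then show ?case by simp
next
  case (Cons a xs)
  have "pdisj (gstep F M a)" using Cons.prems unfolding pdisj_def gstep_def by auto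
  then show ?case using Cons.IH by simp
qed

lemma foldl_cong: "F \<inter> set xs = F' \<inter> set xs \<Longrightarrow> foldl (gstep F) M xs = foldl (gstep F') M xs"
proof (induction xs arbitrary: M)
  case Nil then show ?case by simp
next
  case (Cons a xs)
  have "gstep F M a = gstep F' M a" using Cons.prems unfolding gstep_def by auto
  moreover have "F \<inter> set xs = F' \<inter> set xs" using Cons.prems by auto
  ultimately show ?case using Cons.IH by simp
qed

lemma greedy_sub: "greedy \<pi> F \<subseteq> F \<inter> set \<pi>"
  using foldl_sub[of F "{}" \<pi>] by (simp add: greedy_foldl)

lemma greedy_pdisj: "pdisj (greedy \<pi> F)"
  unfolding greedy_foldl by (rule foldl_pdisj) (simp add: pdisj_def)

lemma greedy_cong: "F \<inter> set xs = F' \<inter> set xs \<Longrightarrow> greedy xs F = greedy xs F'"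
  unfolding greedy_foldl by (rule foldl_cong)

lemma greedy_split_in:
  assumes "\<pi> = xs @ e # ys" "e \<in> F" "e \<inter> \<Union>(greedy xs F) = {}"
  shows "e \<in> greedy \<pi> F"
proof -
  have "greedy \<pi> F = foldl (gstep F) (gstep F (greedy xs F) e) ys"
    using assms(1) by (simp add: greedy_foldl)
  moreover have "e \<in> gstep F (greedy xs F) e" using assms by (simp add: gstep_def)
  ultimately show ?thesis using foldl_mono by blast
qed

lemma greedy_prefix_sub:
  assumes "\<pi> = xs @ ys"
  shows "greedy xs F \<subseteq> greedy \<pi> F"
  using assms foldl_mono by (simp add: greedy_foldl) blast

lemma greedy_block:
  assumes "\<pi> = xs @ e # ys" "e \<in> F" "e \<noteq> {}"
  shows "\<exists>f\<in>greedy \<pi> F. f \<inter> e \<noteq> {} \<and> (f = e \<or> f \<in> set xs)"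
proof (cases "e \<inter> \<Union>(greedy xs F) = {}")
  case True
  then show ?thesis using greedy_split_in[OF assms(1,2) True] assms(3) by blast
next
  case False
  then obtain f where f: "f \<in> greedy xs F" "f \<inter> e \<noteq> {}" by blast
  have "f \<in> greedy \<pi> F" using f greedy_prefix_sub[of \<pi> xs "e # ys"] assms(1) by auto
  moreover have "f \<in> set xs" using f greedy_sub by blast
  ultimately show ?thesis using f by blast
qed

lemma sorted_split_le:
  assumes "sorted_wrt (\<lambda>e f. w e \<ge> (w f::real)) \<pi>" "\<pi> = xs @ e # ys" "f \<in> set xs"
  shows "w f \<ge> w e"
  using assms by (auto simp: sorted_wrt_append)

definition pre :: "'a list \<Rightarrow> 'a \<Rightarrow> 'a list" where
  "pre \<pi> e = takeWhile (\<lambda>f. f \<noteq> e) \<pi>"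

lemma pre_split:
  assumes "distinct \<pi>" "e \<in> set \<pi>"
  obtains ys where "\<pi> = pre \<pi> e @ e # ys" "e \<notin> set (pre \<pi> e)"
proof -
  obtain xs ys where s: "\<pi> = xs @ e # ys" using split_list[OF assms(2)] by blast
  have "e \<notin> set xs" using assms(1) s by auto
  have "\<forall>x\<in>set xs. x \<noteq> e" using \<open>e \<notin> set xs\<close> by blast
  then have "pre \<pi> e = xs" using s unfolding pre_def by (simp add: takeWhile_append2)
  then show ?thesis using that s \<open>e \<notin> set xs\<close> by simp
qed

definition alpha :: "('a set \<Rightarrow> real) \<Rightarrow> 'a set set \<Rightarrow> 'a \<Rightarrow> real" where
  "alpha w M v = sum w {f\<in>M. v \<in> f}"

lemma alpha_nonneg:
  assumes "M \<subseteq> E" "\<forall>e\<in>E. w e \<ge> 0"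
  shows "alpha w M v \<ge> 0"
  unfolding alpha_def using assms by (intro sum_nonneg) auto

lemma alpha_ge:
  assumes "finite M" "M \<subseteq> E" "\<forall>e\<in>E. w e \<ge> 0" "f \<in> M" "v \<in> f"
  shows "w f \<le> alpha w M v"
  unfolding alpha_def using assms by (intro member_le_sum) auto

lemma alpha_lower:
  assumes "finite M" "M \<subseteq> E" "\<forall>e\<in>E. w e \<ge> 0" "f \<in> M" "f \<inter> e \<noteq> {}" "w f \<ge> w e" "finite e"
  shows "w e \<le> (\<Sum>v\<in>e. alpha w M v)"
proof -
  obtain v where v: "v \<in> f" "v \<in> e" using assms(5) by blast
  have "w e \<le> alpha w M v" using alpha_ge[OF assms(1-4) v(1)] assms(6) by linarith
  also have "\<dots> \<le> (\<Sum>v\<in>e. alpha w M v)"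
    using assms v by (intro member_le_sum alpha_nonneg) auto
  finally show ?thesis .
qed

lemma alpha_sum:
  assumes "finite M" "finite U"
  shows "(\<Sum>v\<in>U. alpha w M v) = (\<Sum>f\<in>M. w f * card (f \<inter> U))"
proof -
  have "(\<Sum>v\<in>U. alpha w M v) = (\<Sum>v\<in>U. \<Sum>f\<in>M. if v \<in> f then w f else 0)"
    unfolding alpha_def using assms by (simp add: sum.inter_filter)
  also have "\<dots> = (\<Sum>f\<in>M. \<Sum>v\<in>U. if v \<in> f then w f else 0)" by (rule sum.swap)
  also have "\<dots> = (\<Sum>f\<in>M. w f * card (f \<inter> U))"
  proof (intro sum.cong refl)
    fix f
    have "(\<Sum>v\<in>U. if v \<in> f then w f else 0) = (\<Sum>v\<in>{v\<in>U. v \<in> f}. w f)"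
      using assms by (simp only: sum.inter_filter)
    also have "{v\<in>U. v \<in> f} = f \<inter> U" by blast
    finally show "(\<Sum>v\<in>U. if v \<in> f then w f else 0) = w f * card (f \<inter> U)" by simp
  qed
  finally show ?thesis .
qed

lemma union_sum:
  assumes "pdisj N" "finite N" "\<forall>f\<in>N. finite f"
  shows "(\<Sum>v\<in>\<Union>N. g v) = (\<Sum>f\<in>N. \<Sum>v\<in>f. g v)"
  using sum.Union_disjoint[of N g] assms unfolding pdisj_def by simp

lemma key_cluster:
  fixes w :: "'a set \<Rightarrow> real"
  assumes "finite Mi" "Mi \<subseteq> E" "pdisj Mi" "\<forall>f\<in>Mi. card f = 2"
    "finite MG" "MG \<subseteq> E" "\<forall>e\<in>E. w e \<ge> 0"
    "\<forall>f\<in>Mi. \<exists>g\<in>MG. g \<inter> f \<noteq> {} \<and> w g \<ge> w f" "finite S"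
  shows "(\<Sum>v\<in>S. alpha w Mi v) \<le> mweight w Mi + (\<Sum>v\<in>S. alpha w MG v)"
proof -
  have fin: "\<forall>f\<in>Mi. finite f" using assms(4) by (metis card.infinite zero_neq_numeral)
  have "(\<Sum>v\<in>S. alpha w Mi v) = (\<Sum>f\<in>Mi. w f * card (f \<inter> S))"
    using assms by (rule_tac alpha_sum) auto
  also have "\<dots> \<le> (\<Sum>f\<in>Mi. w f + (if f \<subseteq> S then (\<Sum>v\<in>f. alpha w MG v) else 0))"
  proof (intro sum_mono)
    fix f assume f: "f \<in> Mi"
    have wf: "w f \<ge> 0" using f assms by auto
    show "w f * card (f \<inter> S) \<le> w f + (if f \<subseteq> S then (\<Sum>v\<in>f. alpha w MG v) else 0)"
    proof (cases "f \<subseteq> S")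
      case True
      then have "f \<inter> S = f" by blast
      then have c2: "card (f \<inter> S) = 2" using f assms(4) by simp
      obtain g where "g \<in> MG" "g \<inter> f \<noteq> {}" "w g \<ge> w f" using assms(8) f by blast
      then have "w f \<le> (\<Sum>v\<in>f. alpha w MG v)"
        using assms fin f by (intro alpha_lower[where E=E and f=g]) auto
      then show ?thesis using True c2 by simp
    next
      case False
      then have "f \<inter> S \<subset> f" by blast
      then have "card (f \<inter> S) < card f" using fin f by (intro psubset_card_mono) auto
      then have "card (f \<inter> S) \<le> 1" using f assms(4) by auto
      then have "w f * card (f \<inter> S) \<le> w f * 1" using wf
        by (intro mult_left_mono) auto
      then show ?thesis using False by simp
    qed
  qed
  also have "\<dots> = mweight w Mi + (\<Sum>f\<in>Mi. if f \<subseteq> S then (\<Sum>v\<in>f. alpha w MG v) else 0)"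
    unfolding mweight_def by (simp add: sum.distrib)
  also have "(\<Sum>f\<in>Mi. if f \<subseteq> S then (\<Sum>v\<in>f. alpha w MG v) else 0)
      = (\<Sum>f\<in>{f\<in>Mi. f \<subseteq> S}. \<Sum>v\<in>f. alpha w MG v)"
    using assms(1) by (simp add: sum.inter_filter)
  also have "\<dots> = (\<Sum>v\<in>\<Union>{f\<in>Mi. f \<subseteq> S}. alpha w MG v)"
    using assms(1,3) fin by (intro union_sum[symmetric]) (auto simp: pdisj_def)
  also have "\<dots> \<le> (\<Sum>v\<in>S. alpha w MG v)"
    using assms by (intro sum_mono2 alpha_nonneg) auto
  finally show ?thesis by simp
qed

lemma det_ineq:
  fixes w :: "'a set \<Rightarrow> real" and t :: "'a set \<Rightarrow> real" and Mi :: "nat \<Rightarrow> 'a set set"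
  assumes V: "finite V" "\<forall>e\<in>E. e \<subseteq> V \<and> card e = 2" and nn: "\<forall>e\<in>E. w e \<ge> 0" and fE: "finite E"
    and Q: "Q \<subseteq> E" "pdisj Q" "Q1 \<subseteq> Q"
    and MG: "MG \<subseteq> E" "pdisj MG"
    and I: "finite I" "I \<noteq> {}" "\<forall>i\<in>I. Mi i \<subseteq> E \<and> pdisj (Mi i)"
    and blk: "\<forall>i\<in>I. \<forall>f\<in>Mi i. \<exists>g\<in>MG. g \<inter> f \<noteq> {} \<and> w g \<ge> w f"
    and t1: "\<forall>e\<in>Q1. t e \<le> (\<Sum>v\<in>e. alpha w MG v)"
    and t2: "\<forall>e\<in>Q-Q1. t e \<le> (\<Sum>i\<in>I. \<Sum>v\<in>e. alpha w (Mi i) v) / card I"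
  shows "(\<Sum>e\<in>Q. t e) \<le> 2 * mweight w MG + (\<Sum>i\<in>I. mweight w (Mi i)) / card I"
proof -
  have finE: "\<forall>e\<in>E. finite e" using V by (metis card.infinite zero_neq_numeral)
  have fQ: "finite Q" using Q fE finite_subset by blast
  have fMG: "finite MG" using MG fE finite_subset by blast
  have fMi: "\<forall>i\<in>I. finite (Mi i)" using I fE finite_subset by blast
  define Q2 where "Q2 = Q - Q1"
  have pQ1: "pdisj Q1" using Q(2,3) unfolding pdisj_def by (meson subsetD)
  have pQ2: "pdisj Q2" using Q(2) unfolding pdisj_def Q2_def by (meson DiffD1)
  have fQ1: "finite Q1" and fQ2: "finite Q2" using fQ Q Q2_def finite_subset by auto
  have fS1: "finite (\<Union>Q1)" and fS2: "finite (\<Union>Q2)" using fQ1 fQ2 Q finE Q2_def by auto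
  have "(\<Sum>e\<in>Q. t e) = (\<Sum>e\<in>Q2. t e) + (\<Sum>e\<in>Q1. t e)"
    unfolding Q2_def using Q fQ by (rule_tac sum.subset_diff) auto
  also have "(\<Sum>e\<in>Q1. t e) \<le> (\<Sum>e\<in>Q1. \<Sum>v\<in>e. alpha w MG v)" using t1 by (intro sum_mono) auto
  also have "\<dots> = (\<Sum>v\<in>\<Union>Q1. alpha w MG v)"
    using pQ1 fQ1 finE Q by (intro union_sum[symmetric]) auto
  also have "(\<Sum>e\<in>Q2. t e) \<le> (\<Sum>e\<in>Q2. (\<Sum>i\<in>I. \<Sum>v\<in>e. alpha w (Mi i) v) / card I)"
    using t2 unfolding Q2_def by (intro sum_mono) auto
  also have "\<dots> = (\<Sum>i\<in>I. \<Sum>e\<in>Q2. \<Sum>v\<in>e. alpha w (Mi i) v) / card I"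
    unfolding sum_divide_distrib[symmetric] by (rule arg_cong[where f="\<lambda>x. x / _"], rule sum.swap)
  also have "\<dots> = (\<Sum>i\<in>I. \<Sum>v\<in>\<Union>Q2. alpha w (Mi i) v) / card I"
    using pQ2 fQ2 finE Q unfolding Q2_def by (subst union_sum) auto
  also have "\<dots> \<le> (\<Sum>i\<in>I. mweight w (Mi i) + (\<Sum>v\<in>\<Union>Q2. alpha w MG v)) / card I"
  proof (intro divide_right_mono sum_mono)
    fix i assume i: "i \<in> I"
    show "(\<Sum>v\<in>\<Union>Q2. alpha w (Mi i) v) \<le> mweight w (Mi i) + (\<Sum>v\<in>\<Union>Q2. alpha w MG v)"
    proof (rule key_cluster[where E=E])
      show "finite (Mi i)" "Mi i \<subseteq> E" "pdisj (Mi i)" using i fMi I by auto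
      show "\<forall>f\<in>Mi i. card f = 2" using i I V by blast
      show "\<forall>f\<in>Mi i. \<exists>g\<in>MG. g \<inter> f \<noteq> {} \<and> w g \<ge> w f" using i blk by blast
    qed (use fMG MG nn fS2 in auto)
  qed simp
  also have "\<dots> = (\<Sum>i\<in>I. mweight w (Mi i)) / card I + (\<Sum>v\<in>\<Union>Q2. alpha w MG v)"
    using I by (simp add: sum.distrib add_divide_distrib)
  finally have 1: "(\<Sum>e\<in>Q. t e) \<le> (\<Sum>i\<in>I. mweight w (Mi i)) / card I
      + ((\<Sum>v\<in>\<Union>Q2. alpha w MG v) + (\<Sum>v\<in>\<Union>Q1. alpha w MG v))" by simp
  have "\<Union>Q2 \<inter> \<Union>Q1 = {}"
  proof (rule ccontr)
    assume "\<Union>Q2 \<inter> \<Union>Q1 \<noteq> {}"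
    then obtain v a b where "v \<in> a" "v \<in> b" "a \<in> Q2" "b \<in> Q1" by blast
    moreover then have "a \<noteq> b" "a \<in> Q" "b \<in> Q" using Q(3) unfolding Q2_def by auto
    ultimately show False using Q(2) unfolding pdisj_def by blast
  qed
  then have "(\<Sum>v\<in>\<Union>Q2. alpha w MG v) + (\<Sum>v\<in>\<Union>Q1. alpha w MG v) = (\<Sum>v\<in>\<Union>Q2 \<union> \<Union>Q1. alpha w MG v)"
    using fS1 fS2 by (simp add: sum.union_disjoint)
  also have "\<dots> \<le> (\<Sum>v\<in>V. alpha w MG v)"
    using V Q MG nn unfolding Q2_def by (intro sum_mono2 alpha_nonneg) auto
  also have "\<dots> = (\<Sum>f\<in>MG. w f * card (f \<inter> V))" using fMG V by (intro alpha_sum)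
  also have "\<dots> = (\<Sum>f\<in>MG. 2 * w f)"
  proof (intro sum.cong refl)
    fix f assume "f \<in> MG"
    then have "f \<inter> V = f" "card f = 2" using MG V by auto
    then show "w f * card (f \<inter> V) = 2 * w f" by simp
  qed
  also have "\<dots> = 2 * mweight w MG" unfolding mweight_def by (simp add: sum_distrib_left)
  finally show ?thesis using 1 by linarith
qed

definition subsn :: "nat \<Rightarrow> nat \<Rightarrow> nat set set" where
  "subsn k n = {S. S \<subseteq> {1..k} \<and> card S = n}"

lemma subsn_finite: "finite (subsn k n)"
  unfolding subsn_def by (rule finite_subset[of _ "Pow {1..k}"]) auto

lemma subsn_nonempty: "n \<le> k \<Longrightarrow> subsn k n \<noteq> {}"
proof -
  assume "n \<le> k"
  then have "{1..n} \<in> subsn k n" unfolding subsn_def by auto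
  then show ?thesis by blast
qed

lemma subsn_card: "card (subsn k n) = k choose n"
  unfolding subsn_def using n_subsets[of "{1..k}" n] by simp

lemma cluster_pmf_alt: "cluster_pmf k c = binomial_pmf k (real c / real k) \<bind> (\<lambda>n. pmf_of_set (subsn k n))"
  unfolding cluster_pmf_def subsn_def by simp

lemma set_pmf_binom_le:
  assumes "0 \<le> p" "p \<le> 1" "n \<in> set_pmf (binomial_pmf k p)"
  shows "n \<le> k"
  using assms by (auto simp: set_pmf_binomial_eq split: if_splits)

lemma p_bounds: "c \<le> k \<Longrightarrow> 0 \<le> real c / real k \<and> real c / real k \<le> 1"
  by (cases "k = 0") (auto simp: divide_le_eq_1)

lemma cluster_support:
  assumes "c \<le> k" "S \<in> set_pmf (cluster_pmf k c)"
  shows "S \<subseteq> {1..k}"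
proof -
  have p: "0 \<le> real c / real k" "real c / real k \<le> 1" using p_bounds[OF assms(1)] by auto
  from assms(2) obtain n where n: "n \<in> set_pmf (binomial_pmf k (real c / real k))"
    "S \<in> set_pmf (pmf_of_set (subsn k n))" unfolding cluster_pmf_alt set_bind_pmf by blast
  have "n \<le> k" using set_pmf_binom_le[OF p n(1)] .
  then have "set_pmf (pmf_of_set (subsn k n)) = subsn k n"
    using subsn_finite subsn_nonempty by (intro set_pmf_of_set) auto
  then have "S \<in> subsn k n" using n(2) by simp
  then show ?thesis unfolding subsn_def by blast
qed

lemma cluster_finite:
  assumes "c \<le> k"
  shows "finite (set_pmf (cluster_pmf k c))"
proof (rule finite_subset[of _ "Pow {1..k}"])
  show "set_pmf (cluster_pmf k c) \<subseteq> Pow {1..k}" using cluster_support[OF assms] by blast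
qed simp

lemma prob_bind_finite:
  assumes "finite A" "set_pmf p \<subseteq> A" "\<And>x. x \<in> A \<Longrightarrow> finite (set_pmf (f x))"
  shows "measure_pmf.prob (p \<bind> f) X = (\<Sum>a\<in>A. pmf p a * measure_pmf.prob (f a) X)"
proof -
  have "measure_pmf.prob (p \<bind> f) X = measure_pmf.expectation (p \<bind> f) (indicator X)" by simp
  also have "\<dots> = (\<Sum>a\<in>A. pmf p a *\<^sub>R measure_pmf.expectation (f a) (indicator X))"
    using assms by (intro pmf_expectation_bind) auto
  finally show ?thesis by simp
qed

lemma cluster_miss:
  assumes "c \<le> k" "0 < k" "T \<subseteq> {1..k}"
  shows "measure_pmf.prob (cluster_pmf k c) {y. y \<inter> T = {}} = (1 - real c / real k) ^ card T"
proof -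
  define p where "p = real c / real k"
  define t where "t = card T"
  have p: "0 \<le> p" "p \<le> 1" using assms unfolding p_def by auto
  have fT: "finite T" using assms(3) finite_subset by blast
  have tk: "t \<le> k" unfolding t_def using card_mono[OF _ assms(3)] by simp
  have "measure_pmf.prob (cluster_pmf k c) {y. y \<inter> T = {}} =
     (\<Sum>n\<in>{..k}. pmf (binomial_pmf k p) n * measure_pmf.prob (pmf_of_set (subsn k n)) {y. y \<inter> T = {}})"
    unfolding cluster_pmf_alt p_def[symmetric]
    using set_pmf_binom_le[OF p] subsn_finite subsn_nonempty
    by (intro prob_bind_finite) auto
  also have "\<dots> = (\<Sum>n\<in>{..k}. real ((k - t) choose n) * p ^ n * (1 - p) ^ (k - n))"
  proof (intro sum.cong refl)
    fix n assume "n \<in> {..k}"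
    then have nk: "n \<le> k" by simp
    have "subsn k n \<inter> {y. y \<inter> T = {}} = {S. S \<subseteq> {1..k} - T \<and> card S = n}"
      unfolding subsn_def by auto
    then have "card (subsn k n \<inter> {y. y \<inter> T = {}}) = (k - t) choose n"
      using n_subsets[of "{1..k} - T" n] assms(3) fT unfolding t_def
      by (simp add: card_Diff_subset)
    moreover have "measure_pmf.prob (pmf_of_set (subsn k n)) {y. y \<inter> T = {}}
        = card (subsn k n \<inter> {y. y \<inter> T = {}}) / card (subsn k n)"
      using subsn_finite subsn_nonempty[OF nk] by (simp add: measure_pmf_of_set)
    moreover have "real (k choose n) \<noteq> 0" using nk by simp
    ultimately show "pmf (binomial_pmf k p) n * measure_pmf.prob (pmf_of_set (subsn k n)) {y. y \<inter> T = {}}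
        = real ((k - t) choose n) * p ^ n * (1 - p) ^ (k - n)"
      using p by (simp add: subsn_card)
  qed
  also have "\<dots> = (\<Sum>n\<in>{..k-t}. real ((k - t) choose n) * p ^ n * (1 - p) ^ (k - n))"
    by (rule sum.mono_neutral_right) auto
  also have "\<dots> = (\<Sum>n\<in>{..k-t}. (1-p)^t * (real ((k - t) choose n) * p ^ n * (1 - p) ^ (k - t - n)))"
  proof (intro sum.cong refl)
    fix n assume "n \<in> {..k-t}"
    then have "k - n = t + (k - t - n)" using tk by auto
    then show "real ((k - t) choose n) * p ^ n * (1 - p) ^ (k - n) =
        (1-p)^t * (real ((k - t) choose n) * p ^ n * (1 - p) ^ (k - t - n))"
      by (simp add: power_add)
  qed
  also have "\<dots> = (1-p)^t * (\<Sum>n\<in>{..k-t}. real ((k - t) choose n) * p ^ n * (1 - p) ^ (k - t - n))"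
    by (rule sum_distrib_left[symmetric])
  also have "(\<Sum>n\<in>{..k-t}. real ((k - t) choose n) * p ^ n * (1 - p) ^ (k - t - n)) = (p + (1 - p)) ^ (k - t)"
    by (rule binomial_ring[symmetric])
  finally show ?thesis unfolding p_def t_def by simp
qed

lemma exp_bind_ge:
  fixes h :: "'b \<Rightarrow> real"
  assumes "finite (set_pmf p)" "\<And>x. x \<in> set_pmf p \<Longrightarrow> finite (set_pmf (q x))"
    "\<And>x. x \<in> set_pmf p \<Longrightarrow> b \<le> measure_pmf.expectation (q x) h"
  shows "b \<le> measure_pmf.expectation (p \<bind> q) h"
proof -
  have "measure_pmf.expectation (p \<bind> q) h = (\<Sum>a\<in>set_pmf p. pmf p a * measure_pmf.expectation (q a) h)"
    using assms by (subst pmf_expectation_bind[of "set_pmf p"]) auto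
  also have "\<dots> \<ge> (\<Sum>a\<in>set_pmf p. pmf p a * b)"
    using assms by (intro sum_mono mult_left_mono) auto
  moreover have "(\<Sum>a\<in>set_pmf p. pmf p a * b) = b"
    using sum_pmf_eq_1[OF assms(1) order_refl] by (simp add: sum_distrib_right[symmetric])
  ultimately show ?thesis by simp
qed

lemma Pi_finite_support:
  assumes "finite A" "\<And>x. x \<in> A \<Longrightarrow> finite (set_pmf (p x))"
  shows "finite (set_pmf (Pi_pmf A dflt p))"
proof (rule finite_subset[OF set_Pi_pmf_subset'[OF assms(1)]])
  show "finite (PiE_dflt A dflt (set_pmf \<circ> p))" using assms by (intro finite_PiE_dflt) auto
qed

lemma edge_bound:
  fixes g :: "('e \<Rightarrow> 'b) \<Rightarrow> real"
  assumes "finite E" "e \<in> E" "finite (set_pmf C)"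
    "\<And>B. b \<le> measure_pmf.expectation C (\<lambda>y. g (B(e := y)))"
  shows "b \<le> measure_pmf.expectation (Pi_pmf E dflt (\<lambda>_. C)) g"
proof -
  define E' where "E' = E - {e}"
  have E: "E = insert e E'" "finite E'" "e \<notin> E'" using assms unfolding E'_def by auto
  define P where "P = Pi_pmf E' dflt (\<lambda>_. C)"
  have fP: "finite (set_pmf P)" unfolding P_def using E assms by (intro Pi_finite_support) auto
  have "Pi_pmf E dflt (\<lambda>_. C) = map_pmf (\<lambda>(y,f). f(e:=y)) (pair_pmf C P)"
    unfolding P_def E(1) by (rule Pi_pmf_insert[OF E(2,3)])
  also have "pair_pmf C P = map_pmf (\<lambda>(x, y). (y, x)) (pair_pmf P C)" by (rule pair_commute_pmf)
  finally have eq: "measure_pmf.expectation (Pi_pmf E dflt (\<lambda>_. C)) g =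
      measure_pmf.expectation (pair_pmf P C) (\<lambda>(f,y). g (f(e:=y)))"
    by (simp only: integral_map_pmf) (intro arg_cong[where f="measure_pmf.expectation _"] ext; auto split: prod.splits)
  have "b \<le> measure_pmf.expectation (P \<bind> (\<lambda>f. C \<bind> (\<lambda>y. return_pmf (f, y)))) (\<lambda>(f,y). g (f(e:=y)))"
  proof (rule exp_bind_ge[OF fP])
    fix f :: "'e \<Rightarrow> 'b"
    show "finite (set_pmf (C \<bind> (\<lambda>y. return_pmf (f, y))))" using assms(3) by simp
    have "C \<bind> (\<lambda>y. return_pmf (f, y)) = map_pmf (\<lambda>y. (f, y)) C" by (simp add: map_pmf_def)
    then show "b \<le> measure_pmf.expectation (C \<bind> (\<lambda>y. return_pmf (f, y))) (\<lambda>(f,y). g (f(e:=y)))"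
      using assms(4)[of f] by simp
  qed
  then show ?thesis unfolding eq pair_pmf_def .
qed

definition swp :: "nat \<Rightarrow> nat \<Rightarrow> nat" where
  "swp i x = (if x = i then 1 else if x = 1 then i else x)"

lemma swp_swp: "swp i (swp i x) = x" unfolding swp_def by auto

lemma swp_inj: "inj (swp i)" by (metis injI swp_swp)

lemma swp_mem: "i \<in> swp j ` X \<longleftrightarrow> swp j i \<in> X"
  by (metis image_iff swp_swp)

lemma swp_subsn:
  assumes "i \<in> {1..k}"
  shows "image (swp i) ` subsn k n = subsn k n"
proof -
  have 1: "swp i ` S \<in> subsn k n" if "S \<in> subsn k n" for S
  proof -
    have "swp i ` S \<subseteq> {1..k}" using that assms unfolding subsn_def swp_def by auto
    moreover have "card (swp i ` S) = card S" using swp_inj by (metis card_image inj_on_subset subset_UNIV)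
    ultimately show ?thesis using that unfolding subsn_def by auto
  qed
  show ?thesis
  proof
    show "image (swp i) ` subsn k n \<subseteq> subsn k n" using 1 by blast
    show "subsn k n \<subseteq> image (swp i) ` subsn k n"
    proof
      fix S assume "S \<in> subsn k n"
      moreover have "S = swp i ` (swp i ` S)" by (simp add: image_image swp_swp)
      ultimately show "S \<in> image (swp i) ` subsn k n" using 1 by blast
    qed
  qed
qed

lemma cluster_swp:
  assumes "i \<in> {1..k}" "c \<le> k"
  shows "map_pmf (image (swp i)) (cluster_pmf k c) = cluster_pmf k c"
proof -
  have p: "0 \<le> real c / real k" "real c / real k \<le> 1" using p_bounds[OF assms(2)] by auto
  have "map_pmf (image (swp i)) (cluster_pmf k c) =
     binomial_pmf k (real c / real k) \<bind> (\<lambda>n. map_pmf (image (swp i)) (pmf_of_set (subsn k n)))"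
    unfolding cluster_pmf_alt map_bind_pmf ..
  also have "\<dots> = binomial_pmf k (real c / real k) \<bind> (\<lambda>n. pmf_of_set (subsn k n))"
  proof (rule bind_pmf_cong[OF refl])
    fix n assume "n \<in> set_pmf (binomial_pmf k (real c / real k))"
    then have "n \<le> k" using set_pmf_binom_le[OF p] by blast
    have "inj_on (image (swp i)) (subsn k n)"
      by (rule inj_on_image) (meson inj_on_subset subset_UNIV swp_inj)
    then have "map_pmf (image (swp i)) (pmf_of_set (subsn k n)) = pmf_of_set (image (swp i) ` subsn k n)"
      using subsn_finite subsn_nonempty[OF \<open>n \<le> k\<close>] by (intro map_pmf_of_set_inj) auto
    then show "map_pmf (image (swp i)) (pmf_of_set (subsn k n)) = pmf_of_set (subsn k n)"
      using swp_subsn[OF assms(1)] by simp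
  qed
  finally show ?thesis unfolding cluster_pmf_alt .
qed

lemma symmetry:
  fixes g :: "'a set set \<Rightarrow> real"
  assumes "i \<in> {1..k}" "c \<le> k" "finite E"
  shows "measure_pmf.expectation (random_clustering E k c) (\<lambda>A. g (cluster_edges E A i)) =
         measure_pmf.expectation (random_clustering E k c) (\<lambda>A. g (cluster_edges E A 1))"
proof -
  have "Pi_pmf E (swp i ` {}) (\<lambda>x. map_pmf (image (swp i)) (cluster_pmf k c)) =
      map_pmf (\<lambda>h. image (swp i) \<circ> h) (Pi_pmf E {} (\<lambda>_. cluster_pmf k c))"
    by (rule Pi_pmf_map[OF assms(3)]) simp
  then have R: "map_pmf (\<lambda>h. image (swp i) \<circ> h) (random_clustering E k c) = random_clustering E k c"
    unfolding random_clustering_def cluster_swp[OF assms(1,2)] by simp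
  have ce: "cluster_edges E (image (swp i) \<circ> A) i = cluster_edges E A 1" for A
    unfolding cluster_edges_def by (simp add: swp_mem) (simp add: swp_def)
  have "measure_pmf.expectation (random_clustering E k c) (\<lambda>A. g (cluster_edges E A i)) =
     measure_pmf.expectation (map_pmf (\<lambda>h. image (swp i) \<circ> h) (random_clustering E k c)) (\<lambda>A. g (cluster_edges E A i))"
    by (simp only: R)
  also have "\<dots> = measure_pmf.expectation (random_clustering E k c) (\<lambda>A. g (cluster_edges E A 1))"
    by (simp add: ce)
  finally show ?thesis .
qed

definition Ms :: "'a set set \<Rightarrow> 'a set list \<Rightarrow> ('a set \<Rightarrow> nat set) \<Rightarrow> nat \<Rightarrow> 'a set set" where
  "Ms E \<pi> A i = greedy \<pi> (cluster_edges E A i)"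
definition HH :: "'a set set \<Rightarrow> 'a set list \<Rightarrow> nat \<Rightarrow> ('a set \<Rightarrow> nat set) \<Rightarrow> 'a set set" where
  "HH E \<pi> k A = (\<Union>i\<in>{1..k}. Ms E \<pi> A i)"
definition MGf :: "'a set set \<Rightarrow> 'a set list \<Rightarrow> nat \<Rightarrow> ('a set \<Rightarrow> nat set) \<Rightarrow> 'a set set" where
  "MGf E \<pi> k A = greedy \<pi> (HH E \<pi> k A)"
definition TT :: "'a set set \<Rightarrow> 'a set list \<Rightarrow> nat \<Rightarrow> ('a set \<Rightarrow> nat set) \<Rightarrow> 'a set \<Rightarrow> nat set" where
  "TT E \<pi> k A e = {i\<in>{1..k}. e \<inter> \<Union>(greedy (pre \<pi> e) (cluster_edges E A i)) = {}}"
definition tm :: "'a set set \<Rightarrow> ('a set \<Rightarrow> real) \<Rightarrow> 'a set list \<Rightarrow> nat \<Rightarrow> real \<Rightarrow> ('a set \<Rightarrow> nat set) \<Rightarrow> 'a set \<Rightarrow> real" where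
  "tm E w \<pi> k \<delta> A e = (if \<delta> * real k \<le> real (card (TT E \<pi> k A e))
      then (if e \<in> HH E \<pi> k A then w e else 0)
      else w e * real (card ({1..k} - TT E \<pi> k A e)) / real k)"

lemma greedy_block_w:
  assumes "weight_ordering E w \<pi>" "e \<in> F" "F \<subseteq> E" "e \<noteq> {}"
  shows "\<exists>f\<in>greedy \<pi> F. f \<inter> e \<noteq> {} \<and> w f \<ge> w e"
proof -
  have "e \<in> set \<pi>" using assms unfolding weight_ordering_def by blast
  then obtain xs ys where s: "\<pi> = xs @ e # ys" using split_list by metis
  obtain f where f: "f \<in> greedy \<pi> F" "f \<inter> e \<noteq> {}" "f = e \<or> f \<in> set xs"
    using greedy_block[OF s assms(2,4)] by blast
  have "w f \<ge> w e"
  proof (cases "f = e")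
    case False
    then have "f \<in> set xs" using f by blast
    then show ?thesis using sorted_split_le[of w \<pi> xs e ys f] assms(1) s
      unfolding weight_ordering_def by blast
  qed simp
  then show ?thesis using f by blast
qed

lemma per_outcome:
  fixes w :: "'a set \<Rightarrow> real"
  assumes G: "simple_graph V E" and nn: "\<forall>e\<in>E. w e \<ge> 0" and wo: "weight_ordering E w \<pi>"
    and k: "0 < k" and Q: "Q \<subseteq> E" "pdisj Q"
  shows "(\<Sum>e\<in>Q. tm E w \<pi> k \<delta> A e) \<le> 2 * mweight w (MGf E \<pi> k A)
           + (\<Sum>i\<in>{1..k}. mweight w (Ms E \<pi> A i)) / card {1..k}"
proof -
  have V: "finite V" "\<forall>e\<in>E. e \<subseteq> V \<and> card e = 2" using G unfolding simple_graph_def by auto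
  have "E \<subseteq> Pow V" using V(2) by blast
  then have fE: "finite E" using V(1) finite_subset by blast
  have ne: "\<forall>e\<in>E. e \<noteq> {}" using V(2) by (metis card.empty zero_neq_numeral)
  have finE: "\<forall>e\<in>E. finite e" using V finite_subset by blast
  have ceE: "cluster_edges E A i \<subseteq> E" for i unfolding cluster_edges_def by blast
  have MsE: "Ms E \<pi> A i \<subseteq> E" for i unfolding Ms_def using greedy_sub ceE by blast
  have HE: "HH E \<pi> k A \<subseteq> E" unfolding HH_def using MsE by blast
  have MGE: "MGf E \<pi> k A \<subseteq> E" unfolding MGf_def using greedy_sub HE by blast
  have fMG: "finite (MGf E \<pi> k A)" using MGE fE finite_subset by blast
  have fMs: "finite (Ms E \<pi> A i)" for i using MsE fE finite_subset by blast
  define Q1 where "Q1 = {e\<in>Q. \<delta> * real k \<le> real (card (TT E \<pi> k A e))}"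
  have cardI: "card {1..k} = k" by simp
  show ?thesis
  proof (rule det_ineq[OF V(1) V(2) nn fE Q(1) Q(2), of Q1 "MGf E \<pi> k A" "{1..k}" "Ms E \<pi> A"])
    show "Q1 \<subseteq> Q" unfolding Q1_def by blast
    show "MGf E \<pi> k A \<subseteq> E" by (rule MGE)
    show "pdisj (MGf E \<pi> k A)" unfolding MGf_def by (rule greedy_pdisj)
    show "finite {1..k}" "{1..k} \<noteq> {}" using k by auto
    show "\<forall>i\<in>{1..k}. Ms E \<pi> A i \<subseteq> E \<and> pdisj (Ms E \<pi> A i)"
      using MsE unfolding Ms_def by (simp add: greedy_pdisj)
    show "\<forall>i\<in>{1..k}. \<forall>f\<in>Ms E \<pi> A i. \<exists>g\<in>MGf E \<pi> k A. g \<inter> f \<noteq> {} \<and> w g \<ge> w f"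
    proof (intro ballI)
      fix i f assume i: "i \<in> {1..k}" and f: "f \<in> Ms E \<pi> A i"
      have fH: "f \<in> HH E \<pi> k A" using i f unfolding HH_def by blast
      have "f \<noteq> {}" using fH HE ne by blast
      then show "\<exists>g\<in>MGf E \<pi> k A. g \<inter> f \<noteq> {} \<and> w g \<ge> w f"
        unfolding MGf_def by (rule greedy_block_w[OF wo fH HE])
    qed
    show "\<forall>e\<in>Q1. tm E w \<pi> k \<delta> A e \<le> (\<Sum>v\<in>e. alpha w (MGf E \<pi> k A) v)"
    proof
      fix e assume e: "e \<in> Q1"
      then have eE: "e \<in> E" using Q unfolding Q1_def by blast
      have nn2: "0 \<le> (\<Sum>v\<in>e. alpha w (MGf E \<pi> k A) v)"
        using MGE nn by (intro sum_nonneg alpha_nonneg) auto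
      show "tm E w \<pi> k \<delta> A e \<le> (\<Sum>v\<in>e. alpha w (MGf E \<pi> k A) v)"
      proof (cases "e \<in> HH E \<pi> k A")
        case True
        have "e \<noteq> {}" using eE ne by blast
        then obtain g where g: "g \<in> MGf E \<pi> k A" "g \<inter> e \<noteq> {}" "w g \<ge> w e"
          unfolding MGf_def using greedy_block_w[OF wo True HE] by blast
        have "w e \<le> (\<Sum>v\<in>e. alpha w (MGf E \<pi> k A) v)"
          using alpha_lower[OF fMG MGE nn g] finE eE by blast
        then show ?thesis using e True unfolding tm_def Q1_def by simp
      next
        case False
        then show ?thesis using e nn2 unfolding tm_def Q1_def by simp
      qed
    qed
    show "\<forall>e\<in>Q - Q1. tm E w \<pi> k \<delta> A e \<le> (\<Sum>i\<in>{1..k}. \<Sum>v\<in>e. alpha w (Ms E \<pi> A i) v) / card {1..k}"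
    proof
      fix e assume e: "e \<in> Q - Q1"
      then have eE: "e \<in> E" using Q by blast
      have "e \<in> set \<pi>" using wo eE unfolding weight_ordering_def by blast
      then obtain ys where s: "\<pi> = pre \<pi> e @ e # ys" using wo pre_split unfolding weight_ordering_def by metis
      have tm: "tm E w \<pi> k \<delta> A e = (\<Sum>i\<in>{1..k} - TT E \<pi> k A e. w e) / k"
        using e unfolding tm_def Q1_def by simp
      also have "\<dots> \<le> (\<Sum>i\<in>{1..k} - TT E \<pi> k A e. \<Sum>v\<in>e. alpha w (Ms E \<pi> A i) v) / k"
      proof (intro divide_right_mono sum_mono)
        fix i assume i: "i \<in> {1..k} - TT E \<pi> k A e"
        then obtain f where f: "f \<in> greedy (pre \<pi> e) (cluster_edges E A i)" "f \<inter> e \<noteq> {}"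
          unfolding TT_def by blast
        have fM: "f \<in> Ms E \<pi> A i" using f greedy_prefix_sub[OF s] unfolding Ms_def by blast
        have "f \<in> set (pre \<pi> e)" using f greedy_sub by blast
        then have "w f \<ge> w e" using sorted_split_le[of w \<pi> "pre \<pi> e" e ys f] wo s
          unfolding weight_ordering_def by blast
        then show "w e \<le> (\<Sum>v\<in>e. alpha w (Ms E \<pi> A i) v)"
          using alpha_lower[OF fMs MsE nn fM f(2)] finE eE by blast
      qed simp
      also have "\<dots> \<le> (\<Sum>i\<in>{1..k}. \<Sum>v\<in>e. alpha w (Ms E \<pi> A i) v) / k"
        using MsE nn by (intro divide_right_mono sum_mono2 sum_nonneg alpha_nonneg) auto
      finally show "tm E w \<pi> k \<delta> A e \<le> (\<Sum>i\<in>{1..k}. \<Sum>v\<in>e. alpha w (Ms E \<pi> A i) v) / card {1..k}"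
        by simp
    qed
  qed
qed

lemma miss_small:
  assumes "0 < k" "c \<le> k" "\<delta> * real k \<le> real t" "ln (1/\<delta>) \<le> real c * \<delta>" "0 < \<delta>"
  shows "(1 - real c / real k) ^ t \<le> \<delta>"
proof -
  define p where "p = real c / real k"
  have p: "0 \<le> p" "p \<le> 1" using p_bounds[OF assms(2)] unfolding p_def by auto
  have "1 - p \<le> exp (- p)" using exp_ge_add_one_self[of "-p"] by simp
  then have "(1 - p) ^ t \<le> exp (- p) ^ t" using p by (intro power_mono) auto
  also have "\<dots> = exp (- (p * real t))" by (simp add: exp_of_nat_mult[symmetric] mult.commute)
  also have "\<dots> \<le> exp (- ln (1/\<delta>))"
  proof -
    have "p * real t \<ge> p * (\<delta> * real k)" using p assms(3) by (intro mult_left_mono) auto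
    also have "p * (\<delta> * real k) = real c * \<delta>" unfolding p_def using assms(1) by simp
    finally show ?thesis using assms(4) by simp
  qed
  also have "\<dots> = \<delta>" using assms(5) by (simp add: ln_div exp_minus)
  finally show ?thesis unfolding p_def .
qed

lemma TT_upd:
  assumes "weight_ordering E w \<pi>" "e \<in> E"
  shows "TT E \<pi> k (B(e := y)) e = TT E \<pi> k B e"
proof -
  have "e \<in> set \<pi>" "distinct \<pi>" using assms unfolding weight_ordering_def by auto
  then obtain ys where s: "\<pi> = pre \<pi> e @ e # ys" "e \<notin> set (pre \<pi> e)" using pre_split by metis
  have "greedy (pre \<pi> e) (cluster_edges E (B(e := y)) i) = greedy (pre \<pi> e) (cluster_edges E B i)" for i
    by (rule greedy_cong) (use s(2) in \<open>auto simp: cluster_edges_def\<close>)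
  then show ?thesis unfolding TT_def by simp
qed

lemma in_HH:
  assumes "weight_ordering E w \<pi>" "e \<in> E" "i \<in> TT E \<pi> k B e" "i \<in> y"
  shows "e \<in> HH E \<pi> k (B(e := y))"
proof -
  have "e \<in> set \<pi>" "distinct \<pi>" using assms unfolding weight_ordering_def by auto
  then obtain ys where s: "\<pi> = pre \<pi> e @ e # ys" "e \<notin> set (pre \<pi> e)" using pre_split by metis
  have i: "i \<in> {1..k}" "i \<in> TT E \<pi> k (B(e := y)) e" using assms(3) TT_upd[OF assms(1,2)] unfolding TT_def by auto
  have "e \<in> cluster_edges E (B(e := y)) i" using assms(2,4) unfolding cluster_edges_def by simp
  moreover have "e \<inter> \<Union>(greedy (pre \<pi> e) (cluster_edges E (B(e := y)) i)) = {}" using i unfolding TT_def by blast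
  ultimately have "e \<in> Ms E \<pi> (B(e := y)) i" unfolding Ms_def using greedy_split_in[OF s(1)] by blast
  then show ?thesis using i unfolding HH_def by blast
qed

lemma per_edge:
  fixes w :: "'a set \<Rightarrow> real"
  assumes fE: "finite E" and nn: "\<forall>e\<in>E. w e \<ge> 0" and wo: "weight_ordering E w \<pi>"
    and e: "e \<in> E" and ck: "c \<le> k" "0 < k" and d: "0 < \<delta>" "ln (1/\<delta>) \<le> real c * \<delta>"
  shows "(1 - \<delta>) * w e \<le> measure_pmf.expectation (random_clustering E k c) (\<lambda>A. tm E w \<pi> k \<delta> A e)"
  unfolding random_clustering_def
proof (rule edge_bound[OF fE e cluster_finite[OF ck(1)]])
  fix B :: "'a set \<Rightarrow> nat set"
  define T where "T = TT E \<pi> k B e"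
  have we: "0 \<le> w e" using nn e by blast
  have Tk: "T \<subseteq> {1..k}" unfolding T_def TT_def by blast
  have fin: "finite (set_pmf (cluster_pmf k c))" by (rule cluster_finite[OF ck(1)])
  show "(1 - \<delta>) * w e \<le> measure_pmf.expectation (cluster_pmf k c) (\<lambda>y. tm E w \<pi> k \<delta> (B(e := y)) e)"
  proof (cases "\<delta> * real k \<le> real (card T)")
    case True
    have pt: "w e - w e * indicator {y. y \<inter> T = {}} y \<le> tm E w \<pi> k \<delta> (B(e := y)) e" for y
    proof (cases "y \<inter> T = {}")
      case True2: True
      then show ?thesis using we True unfolding tm_def TT_upd[OF wo e] T_def[symmetric] by simp
    next
      case False
      then obtain i where "i \<in> T" "i \<in> y" by blast
      then have "e \<in> HH E \<pi> k (B(e := y))" using in_HH[OF wo e] unfolding T_def by blast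
      then show ?thesis using False True unfolding tm_def TT_upd[OF wo e] T_def[symmetric] by simp
    qed
    have "measure_pmf.expectation (cluster_pmf k c) (\<lambda>y. w e - w e * indicator {y. y \<inter> T = {}} y)
        = w e - w e * measure_pmf.prob (cluster_pmf k c) {y. y \<inter> T = {}}"
      using fin by (simp add: integrable_measure_pmf_finite Bochner_Integration.integral_diff)
    also have "measure_pmf.prob (cluster_pmf k c) {y. y \<inter> T = {}} = (1 - real c / real k) ^ card T"
      by (rule cluster_miss[OF ck Tk])
    also have "(1 - real c / real k) ^ card T \<le> \<delta>" using miss_small[OF ck(2,1) True d(2,1)] .
    then have "w e - w e * (1 - real c / real k) ^ card T \<ge> w e - w e * \<delta>"
      using we by (simp add: mult_left_mono)
    finally have "(1 - \<delta>) * w e \<le> measure_pmf.expectation (cluster_pmf k c) (\<lambda>y. w e - w e * indicator {y. y \<inter> T = {}} y)"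
      by (simp add: algebra_simps)
    also have "\<dots> \<le> measure_pmf.expectation (cluster_pmf k c) (\<lambda>y. tm E w \<pi> k \<delta> (B(e := y)) e)"
      using fin pt by (intro integral_mono integrable_measure_pmf_finite) auto
    finally show ?thesis .
  next
    case False
    have cst: "tm E w \<pi> k \<delta> (B(e := y)) e = w e * real (card ({1..k} - T)) / real k" for y
      using False unfolding tm_def TT_upd[OF wo e] T_def[symmetric] by simp
    have "card ({1..k} - T) = k - card T" using Tk by (simp add: card_Diff_subset finite_subset)
    moreover have "card T \<le> k" using Tk card_mono[of "{1..k}" T] by simp
    ultimately have "real (card ({1..k} - T)) = real k - real (card T)" by simp
    then have "real (card ({1..k} - T)) / real k \<ge> 1 - \<delta>" using False ck(2)
      by (simp add: field_simps)
    then have "w e * (1 - \<delta>) \<le> w e * (real (card ({1..k} - T)) / real k)"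
      using we by (rule mult_left_mono)
    then have "(1 - \<delta>) * w e \<le> w e * real (card ({1..k} - T)) / real k"
      by (simp add: mult.commute)
    then show ?thesis by (simp add: cst)
  qed
qed

lemma cf_theta:
  "(\<lambda>\<epsilon>. real (nat \<lceil>4 * ln (4/\<epsilon>) / \<epsilon>\<rceil>)) \<in> \<Theta>[at_right 0](\<lambda>\<epsilon>. ln (1 / \<epsilon>) / \<epsilon>)"
proof (rule bigthetaI'[of 1 9])
  show "eventually (\<lambda>x. 1 * norm (ln (1 / x) / x) \<le> norm (real (nat \<lceil>4 * ln (4/x) / x\<rceil>))
      \<and> norm (real (nat \<lceil>4 * ln (4/x) / x\<rceil>)) \<le> 9 * norm (ln (1 / x) / x)) (at_right (0::real))"
  proof (rule eventually_at_rightI[of 0 "1/4"])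
    fix x :: real assume x: "x \<in> {0<..<1/4}"
    then have x0: "0 < x" and x4: "x < 1/4" by auto
    have "x * exp 1 \<le> x * 3" using exp_le x0 by (intro mult_left_mono) auto
    then have "x * exp 1 \<le> 1" using x4 by linarith
    then have "exp 1 \<le> 1/x" using x0 by (simp add: field_simps)
    then have "ln (exp 1) \<le> ln (1/x)" using x0 by (subst ln_le_cancel_iff) auto
    then have l1: "1 \<le> ln (1/x)" by simp
    have "4 \<le> 1/x" using x0 x4 by (simp add: field_simps)
    then have l4: "ln 4 \<le> ln (1/x)" using x0 by simp
    have ln4x: "ln (4/x) = ln 4 + ln (1/x)" using x0 by (simp add: ln_div ln_mult divide_inverse ln_inverse)
    define g where "g = ln (1/x) / x"
    have g1: "1 \<le> g" unfolding g_def using l1 x0 x4 by (simp add: field_simps)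
    define a where "a = 4 * ln (4/x) / x"
    have ag: "4 * g \<le> a" unfolding a_def g_def ln4x using x0 l1 by (simp add: field_simps)
    have ag2: "a \<le> 8 * g" unfolding a_def g_def ln4x using x0 l4 by (simp add: field_simps)
    have a0: "0 \<le> a" using ag g1 by linarith
    have c1: "a \<le> real (nat \<lceil>a\<rceil>)" using a0 by linarith
    have c2: "real (nat \<lceil>a\<rceil>) \<le> a + 1" using a0 by linarith
    have gn: "norm g = g" using g1 by simp
    show "1 * norm (ln (1 / x) / x) \<le> norm (real (nat \<lceil>4 * ln (4/x) / x\<rceil>))
      \<and> norm (real (nat \<lceil>4 * ln (4/x) / x\<rceil>)) \<le> 9 * norm (ln (1 / x) / x)"
    proof -
      have n1: "norm (real (nat \<lceil>a\<rceil>)) = real (nat \<lceil>a\<rceil>)" by simp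
      have "1 * norm g \<le> norm (real (nat \<lceil>a\<rceil>)) \<and> norm (real (nat \<lceil>a\<rceil>)) \<le> 9 * norm g"
        unfolding n1 gn using c1 c2 ag ag2 g1 by linarith
      then show ?thesis unfolding a_def g_def .
    qed
  qed simp
qed simp_all

lemma alg_weight:
  "mweight w (alg_output E w \<pi> k A) = max (mweight w (MGf E \<pi> k A)) (mweight w (Ms E \<pi> A 1))"
proof -
  have "alg_output E w \<pi> k A = (if mweight w (MGf E \<pi> k A) \<ge> mweight w (Ms E \<pi> A 1)
      then MGf E \<pi> k A else Ms E \<pi> A 1)"
    unfolding alg_output_def Let_def MGf_def HH_def Ms_def by (rule refl)
  then show ?thesis unfolding max_def by (simp split: if_splits)
qed

lemma opt_exists:
  assumes "finite E"
  obtains Q where "is_matching E Q" "opt E w = mweight w Q"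
proof -
  define S where "S = {mweight w M | M. is_matching E M}"
  have "S \<subseteq> mweight w ` Pow E"
  proof
    fix x assume "x \<in> S"
    then obtain M where M: "x = mweight w M" "is_matching E M" unfolding S_def by blast
    then have "M \<in> Pow E" unfolding is_matching_def by simp
    then show "x \<in> mweight w ` Pow E" unfolding M(1) by (rule imageI)
  qed
  then have fS: "finite S" using assms finite_subset by blast
  have "is_matching E {}" unfolding is_matching_def by simp
  then have "mweight w {} \<in> S" unfolding S_def by blast
  then have "S \<noteq> {}" by blast
  then have "Max S \<in> S" using Max_in fS by blast
  then obtain Q where "Max S = mweight w Q" "is_matching E Q" unfolding S_def by blast
  then show ?thesis using that unfolding S_def opt_def by simp
qed

lemma main_bound:
  fixes w :: "'a set \<Rightarrow> real"
  assumes G: "simple_graph V E" and nn: "\<forall>e\<in>E. w e \<ge> 0" and wo: "weight_ordering E w \<pi>"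
    and ck: "c \<le> k" "1 \<le> c" and d: "0 < \<delta>" "ln (1/\<delta>) \<le> real c * \<delta>"
  shows "(1 - \<delta>) * opt E w \<le> 3 * measure_pmf.expectation (random_clustering E k c)
            (\<lambda>A. mweight w (alg_output E w \<pi> k A))"
proof -
  have V: "finite V" "\<forall>e\<in>E. e \<subseteq> V \<and> card e = 2" using G unfolding simple_graph_def by auto
  have "E \<subseteq> Pow V" using V(2) by blast
  then have fE: "finite E" using V(1) finite_subset by blast
  have k0: "0 < k" using ck by linarith
  define R where "R = random_clustering E k c"
  have fR: "finite (set_pmf R)" unfolding R_def random_clustering_def
    using fE cluster_finite[OF ck(1)] by (intro Pi_finite_support) auto
  have intR: "integrable (measure_pmf R) f" for f :: "('a set \<Rightarrow> nat set) \<Rightarrow> real"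
    using fR by (rule integrable_measure_pmf_finite)
  obtain Q where Q: "is_matching E Q" "opt E w = mweight w Q" using opt_exists[OF fE] by metis
  have QE: "Q \<subseteq> E" and pQ: "pdisj Q" using Q(1) unfolding is_matching_def pdisj_def by auto
  have fQ: "finite Q" using QE fE finite_subset by blast
  have "(1 - \<delta>) * opt E w = (\<Sum>e\<in>Q. (1 - \<delta>) * w e)"
    unfolding Q(2) mweight_def by (simp add: sum_distrib_left)
  also have "\<dots> \<le> (\<Sum>e\<in>Q. measure_pmf.expectation R (\<lambda>A. tm E w \<pi> k \<delta> A e))"
    unfolding R_def using QE by (intro sum_mono per_edge[OF fE nn wo _ ck(1) k0 d]) auto
  also have "\<dots> = measure_pmf.expectation R (\<lambda>A. \<Sum>e\<in>Q. tm E w \<pi> k \<delta> A e)"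
    by (rule Bochner_Integration.integral_sum[symmetric, where f="\<lambda>e A. tm E w \<pi> k \<delta> A e"]) (rule intR)
  also have "\<dots> \<le> measure_pmf.expectation R (\<lambda>A. 2 * mweight w (MGf E \<pi> k A)
           + (\<Sum>i\<in>{1..k}. mweight w (Ms E \<pi> A i)) / card {1..k})"
    by (intro integral_mono intR per_outcome[OF G nn wo k0 QE pQ])
  also have "\<dots> = 2 * measure_pmf.expectation R (\<lambda>A. mweight w (MGf E \<pi> k A))
      + measure_pmf.expectation R (\<lambda>A. mweight w (Ms E \<pi> A 1))"
  proof -
    define MGw where "MGw = (\<lambda>A. mweight w (MGf E \<pi> k A))"
    define Sw where "Sw = (\<lambda>A. \<Sum>i\<in>{1..k}. mweight w (Ms E \<pi> A i))"
    have e1: "measure_pmf.expectation R (\<lambda>A. 2 * MGw A + Sw A / card {1..k})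
        = measure_pmf.expectation R (\<lambda>A. 2 * MGw A) + measure_pmf.expectation R (\<lambda>A. Sw A / card {1..k})"
      by (rule Bochner_Integration.integral_add) (rule intR)+
    have e2: "measure_pmf.expectation R (\<lambda>A. 2 * MGw A) = 2 * measure_pmf.expectation R MGw"
      by (rule integral_mult_right_zero)
    have e3: "measure_pmf.expectation R (\<lambda>A. Sw A / card {1..k}) = measure_pmf.expectation R Sw / card {1..k}"
      by (rule integral_divide_zero)
    have e4: "measure_pmf.expectation R Sw = (\<Sum>i\<in>{1..k}. measure_pmf.expectation R (\<lambda>A. mweight w (Ms E \<pi> A i)))"
      unfolding Sw_def by (rule Bochner_Integration.integral_sum[where f="\<lambda>i A. mweight w (Ms E \<pi> A i)"]) (rule intR)
    also have "\<dots> = (\<Sum>i\<in>{1..k}. measure_pmf.expectation R (\<lambda>A. mweight w (Ms E \<pi> A 1)))"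
    proof (rule sum.cong[OF refl])
      fix i assume "i \<in> {1..k}"
      then show "measure_pmf.expectation R (\<lambda>A. mweight w (Ms E \<pi> A i))
        = measure_pmf.expectation R (\<lambda>A. mweight w (Ms E \<pi> A 1))"
        unfolding R_def Ms_def by (rule symmetry[OF _ ck(1) fE])
    qed
    also have "\<dots> = real k * measure_pmf.expectation R (\<lambda>A. mweight w (Ms E \<pi> A 1))" by simp
    finally have e5: "measure_pmf.expectation R Sw / card {1..k} = measure_pmf.expectation R (\<lambda>A. mweight w (Ms E \<pi> A 1))"
      using k0 by simp
    have "measure_pmf.expectation R (\<lambda>A. 2 * MGw A + Sw A / card {1..k}) = 2 * measure_pmf.expectation R MGw
      + measure_pmf.expectation R (\<lambda>A. mweight w (Ms E \<pi> A 1))"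
      unfolding e1 e2 e3 e5 ..
    then show ?thesis unfolding MGw_def Sw_def .
  qed
  also have "\<dots> = measure_pmf.expectation R (\<lambda>A. 2 * mweight w (MGf E \<pi> k A) + mweight w (Ms E \<pi> A 1))"
  proof -
    have "measure_pmf.expectation R (\<lambda>A. 2 * mweight w (MGf E \<pi> k A) + mweight w (Ms E \<pi> A 1))
      = measure_pmf.expectation R (\<lambda>A. 2 * mweight w (MGf E \<pi> k A)) + measure_pmf.expectation R (\<lambda>A. mweight w (Ms E \<pi> A 1))"
      by (rule Bochner_Integration.integral_add) (rule intR)+
    moreover have "measure_pmf.expectation R (\<lambda>A. 2 * mweight w (MGf E \<pi> k A)) = 2 * measure_pmf.expectation R (\<lambda>A. mweight w (MGf E \<pi> k A))"
      by (rule integral_mult_right_zero)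
    ultimately show ?thesis by simp
  qed
  also have "\<dots> \<le> measure_pmf.expectation R (\<lambda>A. 3 * mweight w (alg_output E w \<pi> k A))"
  proof (rule integral_mono[OF intR intR])
    fix A
    show "2 * mweight w (MGf E \<pi> k A) + mweight w (Ms E \<pi> A 1) \<le> 3 * mweight w (alg_output E w \<pi> k A)"
      unfolding alg_weight by linarith
  qed
  also have "\<dots> = 3 * measure_pmf.expectation R (\<lambda>A. mweight w (alg_output E w \<pi> k A))"
    by (rule integral_mult_right_zero)
  finally show ?thesis unfolding R_def .
qed


lemma opt_nonneg:
  assumes "finite E" "\<forall>e\<in>E. w e \<ge> 0"
  shows "0 \<le> opt E w"
proof -
  obtain Q where Q: "is_matching E Q" "opt E w = mweight w Q" using opt_exists[OF assms(1)] by metis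
  have "Q \<subseteq> E" using Q(1) unfolding is_matching_def by simp
  then have "0 \<le> mweight w Q" unfolding mweight_def using assms(2) by (intro sum_nonneg) blast
  then show ?thesis using Q(2) by simp
qed

lemma final_one:
  fixes w :: "'a set \<Rightarrow> real" and \<epsilon> :: real
  assumes eps: "0 < \<epsilon>" "\<epsilon> < 1" and G: "simple_graph V E" and nn: "\<forall>e\<in>E. w e \<ge> 0"
    and wo: "weight_ordering E w \<pi>" and ck: "nat \<lceil>4 * ln (4/\<epsilon>) / \<epsilon>\<rceil> \<le> k"
  shows "(3 + \<epsilon>) * measure_pmf.expectation (random_clustering E k (nat \<lceil>4 * ln (4/\<epsilon>) / \<epsilon>\<rceil>))
           (\<lambda>A. mweight w (alg_output E w \<pi> k A)) \<ge> opt E w"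
proof -
  define c where "c = nat \<lceil>4 * ln (4/\<epsilon>) / \<epsilon>\<rceil>"
  define X where "X = measure_pmf.expectation (random_clustering E k c) (\<lambda>A. mweight w (alg_output E w \<pi> k A))"
  define \<delta> where "\<delta> = \<epsilon> / 4"
  have "1 < 4 / \<epsilon>" using eps by (simp add: field_simps)
  then have l0: "0 < ln (4 / \<epsilon>)" by (rule ln_gt_zero)
  have a0: "0 < 4 * ln (4/\<epsilon>) / \<epsilon>" using l0 eps by simp
  have ca: "4 * ln (4/\<epsilon>) / \<epsilon> \<le> real c" unfolding c_def by linarith
  have c1: "1 \<le> c" using a0 ca by linarith
  have "ln (4/\<epsilon>) \<le> real c * (\<epsilon> / 4)" using ca eps by (simp add: field_simps)
  moreover have "1 / \<delta> = 4 / \<epsilon>" unfolding \<delta>_def by simp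
  ultimately have d2: "ln (1/\<delta>) \<le> real c * \<delta>" unfolding \<delta>_def by simp
  have d0: "0 < \<delta>" unfolding \<delta>_def using eps by simp
  have mb: "(1 - \<delta>) * opt E w \<le> 3 * X"
    unfolding X_def by (rule main_bound[OF G nn wo ck[folded c_def] c1 d0 d2])
  have "finite V" "\<forall>e\<in>E. e \<subseteq> V" using G unfolding simple_graph_def by auto
  then have "E \<subseteq> Pow V" by blast
  then have fE: "finite E" using \<open>finite V\<close> finite_subset by blast
  have o0: "0 \<le> opt E w" by (rule opt_nonneg[OF fE nn])
  have h1: "(3 + \<epsilon>) * ((1 - \<delta>) * opt E w) \<le> (3 + \<epsilon>) * (3 * X)"
    using mb eps by (intro mult_left_mono) auto
  have coef: "0 \<le> (3 + \<epsilon>) * (1 - \<delta>) - 3"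
  proof -
    have "(3 + \<epsilon>) * (1 - \<delta>) - 3 = \<epsilon> * (1 - \<epsilon>) / 4" unfolding \<delta>_def by (simp add: field_simps)
    moreover have "0 \<le> \<epsilon> * (1 - \<epsilon>) / 4" using eps by simp
    ultimately show ?thesis by linarith
  qed
  have h2: "0 \<le> ((3 + \<epsilon>) * (1 - \<delta>) - 3) * opt E w" using coef o0 by simp
  have "3 * opt E w \<le> 3 * ((3 + \<epsilon>) * X)" using h1 h2 by (simp add: algebra_simps)
  then show ?thesis unfolding X_def c_def by simp
qed

theorem theorem3p6:
  "\<exists>cf :: real \<Rightarrow> nat.
     (\<lambda>\<epsilon>. real (cf \<epsilon>)) \<in> \<Theta>[at_right 0](\<lambda>\<epsilon>. ln (1 / \<epsilon>) / \<epsilon>) \<and>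
     (\<forall>\<epsilon>::real. 0 < \<epsilon> \<and> \<epsilon> < 1 \<longrightarrow> cf \<epsilon> \<ge> 1 \<and>
        (\<forall>(V :: 'a set) E w \<pi> (k :: nat).
           simple_graph V E \<and> (\<forall>e\<in>E. w e \<ge> 0) \<and> weight_ordering E w \<pi> \<and> k \<ge> cf \<epsilon> \<longrightarrow>
           (3 + \<epsilon>) * measure_pmf.expectation (random_clustering E k (cf \<epsilon>))
               (\<lambda>A. mweight w (alg_output E w \<pi> k A)) \<ge> opt E w))"
proof -
  define cf where "cf = (\<lambda>\<epsilon>::real. nat \<lceil>4 * ln (4/\<epsilon>) / \<epsilon>\<rceil>)"
  have th: "(\<lambda>\<epsilon>. real (cf \<epsilon>)) \<in> \<Theta>[at_right 0](\<lambda>\<epsilon>. ln (1 / \<epsilon>) / \<epsilon>)"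
    unfolding cf_def by (rule cf_theta)
  have main: "\<forall>\<epsilon>::real. 0 < \<epsilon> \<and> \<epsilon> < 1 \<longrightarrow> cf \<epsilon> \<ge> 1 \<and>
        (\<forall>(V :: 'a set) E w \<pi> (k :: nat).
           simple_graph V E \<and> (\<forall>e\<in>E. w e \<ge> 0) \<and> weight_ordering E w \<pi> \<and> k \<ge> cf \<epsilon> \<longrightarrow>
           (3 + \<epsilon>) * measure_pmf.expectation (random_clustering E k (cf \<epsilon>))
               (\<lambda>A. mweight w (alg_output E w \<pi> k A)) \<ge> opt E w)"
  proof (intro allI impI)
    fix \<epsilon> :: real assume eps: "0 < \<epsilon> \<and> \<epsilon> < 1"
    have "1 < 4 / \<epsilon>" using eps by (simp add: field_simps)
    then have l0: "0 < ln (4 / \<epsilon>)" by (rule ln_gt_zero)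
    have a0: "0 < 4 * ln (4/\<epsilon>) / \<epsilon>" using l0 eps by simp
    have c1: "cf \<epsilon> \<ge> 1" unfolding cf_def using a0 by linarith
    have rest: "\<forall>(V :: 'a set) E w \<pi> (k :: nat).
           simple_graph V E \<and> (\<forall>e\<in>E. w e \<ge> 0) \<and> weight_ordering E w \<pi> \<and> k \<ge> cf \<epsilon> \<longrightarrow>
           (3 + \<epsilon>) * measure_pmf.expectation (random_clustering E k (cf \<epsilon>))
               (\<lambda>A. mweight w (alg_output E w \<pi> k A)) \<ge> opt E w"
    proof (intro allI impI)
      fix V :: "'a set" and E w \<pi> and k :: nat
      assume h: "simple_graph V E \<and> (\<forall>e\<in>E. w e \<ge> 0) \<and> weight_ordering E w \<pi> \<and> k \<ge> cf \<epsilon>"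
      show "(3 + \<epsilon>) * measure_pmf.expectation (random_clustering E k (cf \<epsilon>))
               (\<lambda>A. mweight w (alg_output E w \<pi> k A)) \<ge> opt E w"
      proof -
        have h1: "simple_graph V E" and h2: "\<forall>e\<in>E. 0 \<le> w e" and h3: "weight_ordering E w \<pi>"
          and h4: "cf \<epsilon> \<le> k" using h by blast+
        have h5: "nat \<lceil>4 * ln (4/\<epsilon>) / \<epsilon>\<rceil> \<le> k" using h4 unfolding cf_def .
        have e1: "0 < \<epsilon>" and e2: "\<epsilon> < 1" using eps by blast+
        show ?thesis unfolding cf_def by (rule final_one[OF e1 e2 h1 h2 h3 h5])
      qed
    qed
    show "cf \<epsilon> \<ge> 1 \<and> (\<forall>(V :: 'a set) E w \<pi> (k :: nat).
           simple_graph V E \<and> (\<forall>e\<in>E. w e \<ge> 0) \<and> weight_ordering E w \<pi> \<and> k \<ge> cf \<epsilon> \<longrightarrow>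
           (3 + \<epsilon>) * measure_pmf.expectation (random_clustering E k (cf \<epsilon>))
               (\<lambda>A. mweight w (alg_output E w \<pi> k A)) \<ge> opt E w)"
      using c1 rest by (rule conjI)
  qed
  show ?thesis by (rule exI[of _ cf], rule conjI[OF th main])
qed

end
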